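(* Let $\Gamma$ be a valued structure with domain $\mathbb{Q}$ all of whose cost functions are piecewise linear (or piecewise linear homogeneous) and submodular. Then $\Gamma$ has fully symmetric fractional polymorphisms of all arities $k\ge2$.
   Context: A valued structure with domain $\mathbb{Q}$ has a signature $\tau$ of function symbols and cost functions $f\colon\mathbb{Q}^{\mathrm{ar}(f)}\to\mathbb{Q}\cup\{+\infty\}$. A cost function is piecewise linear (PL) if, as a partial function defined where finite, it is first-order definable over $\mathfrak{S}=(\mathbb{Q};+,1,\le)$, and piecewise linear homogeneous (PLH) if first-order definable over $\mathfrak{L}=(\mathbb{Q};<,1,(x\mapsto cx)_{c\in\mathbb{Q}})$ (definability of a partial $f$: a formula $\varphi(x_0,\dots,x_n)$ with $\varphi(a_0,a)$ iff $a_0=f(a)$ for $f(a)<\infty$, and no satisfying $a_0$ when $f(a)=+\infty$). $f$ is submodular if $f(\min(a,b))+f(\max(a,b))\le f(a)+f(b)$ for all $a,b$ (componentwise min, max). A $k$-ary fractional polymorphism of $\Gamma$ is a map $\omega$ from operations $\mathbb{Q}^k\to\mathbb{Q}$ to $\mathbb{Q}_{\ge0}$ with finite support, total weight $1$, and $\sum_g\omega(g)f(g(a^1,\dots,a^k))\le\frac1k\sum_i f(a^i)$ for all cost functions $f$ of $\Gamma$ and tuples $a^i$ ($g$ componentwise); it is fully symmetric if each $g$ in its support is invariant under permuting its arguments. *)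

theory Defs
  imports Complex_Main "HOL-Library.Extended_Real" "HOL-Library.Multiset"
begin

datatype 'a fm =
    Atom 'a
  | FNot "'a fm"
  | FAnd "'a fm" "'a fm"
  | FOr "'a fm" "'a fm"
  | FEx nat "'a fm"
  | FAll nat "'a fm"

primrec holds :: "('a \<Rightarrow> (nat \<Rightarrow> rat) \<Rightarrow> bool) \<Rightarrow> 'a fm \<Rightarrow> (nat \<Rightarrow> rat) \<Rightarrow> bool" where
  "holds I (Atom a) e = I a e"
| "holds I (FNot p) e = (\<not> holds I p e)"
| "holds I (FAnd p q) e = (holds I p e \<and> holds I q e)"
| "holds I (FOr p q) e = (holds I p e \<or> holds I q e)"
| "holds I (FEx x p) e = (\<exists>v. holds I p (e(x := v)))"
| "holds I (FAll x p) e = (\<forall>v. holds I p (e(x := v)))"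

datatype sterm = SVar nat | SOne | SPlus sterm sterm

primrec seval :: "sterm \<Rightarrow> (nat \<Rightarrow> rat) \<Rightarrow> rat" where
  "seval (SVar i) e = e i"
| "seval SOne e = 1"
| "seval (SPlus s t) e = seval s e + seval t e"

datatype satom = SEq sterm sterm | SLe sterm sterm

fun satom_sem :: "satom \<Rightarrow> (nat \<Rightarrow> rat) \<Rightarrow> bool" where
  "satom_sem (SEq s t) e = (seval s e = seval t e)"
| "satom_sem (SLe s t) e = (seval s e \<le> seval t e)"

datatype lterm = LVar nat | LOne | LScale rat lterm

primrec leval :: "lterm \<Rightarrow> (nat \<Rightarrow> rat) \<Rightarrow> rat" where
  "leval (LVar i) e = e i"
| "leval LOne e = 1"
| "leval (LScale c t) e = c * leval t e"

datatype latom = LEq lterm lterm | LLess lterm lterm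

fun latom_sem :: "latom \<Rightarrow> (nat \<Rightarrow> rat) \<Rightarrow> bool" where
  "latom_sem (LEq s t) e = (leval s e = leval t e)"
| "latom_sem (LLess s t) e = (leval s e < leval t e)"

text \<open>A cost function of arity n is modelled as f :: rat list => ereal, evaluated on
  lists of length n, with values in Q or +infinity.\<close>

definition rat_valued :: "nat \<Rightarrow> (rat list \<Rightarrow> ereal) \<Rightarrow> bool" where
  "rat_valued n f \<longleftrightarrow>
     (\<forall>xs. length xs = n \<longrightarrow> f xs = \<infinity> \<or> (\<exists>q. f xs = ereal (real_of_rat q)))"

text \<open>phi fo_defines the partial function f: variable 0 is the value, variables 1..n the arguments.\<close>
definition fo_defines :: "('a \<Rightarrow> (nat \<Rightarrow> rat) \<Rightarrow> bool) \<Rightarrow> 'a fm \<Rightarrow> nat \<Rightarrow> (rat list \<Rightarrow> ereal) \<Rightarrow> bool" where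
  "fo_defines I phi n f \<longleftrightarrow>
     (\<forall>e. holds I phi e \<longleftrightarrow> f (map e [1..<n+1]) = ereal (real_of_rat (e 0)))"

definition PL :: "nat \<Rightarrow> (rat list \<Rightarrow> ereal) \<Rightarrow> bool" where
  "PL n f \<longleftrightarrow> (\<exists>phi :: satom fm. fo_defines satom_sem phi n f)"

definition PLH :: "nat \<Rightarrow> (rat list \<Rightarrow> ereal) \<Rightarrow> bool" where
  "PLH n f \<longleftrightarrow> (\<exists>phi :: latom fm. fo_defines latom_sem phi n f)"

definition submodular :: "nat \<Rightarrow> (rat list \<Rightarrow> ereal) \<Rightarrow> bool" where
  "submodular n f \<longleftrightarrow>
     (\<forall>a b. length a = n \<longrightarrow> length b = n \<longrightarrow>
        f (map2 min a b) + f (map2 max a b) \<le> f a + f b)"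

text \<open>A k-ary operation is g :: rat list => rat, applied to argument lists of length k.
  Applying g componentwise to the tuples as = [a^1,...,a^k] (each of length n):\<close>
definition apply_op :: "(rat list \<Rightarrow> rat) \<Rightarrow> nat \<Rightarrow> rat list list \<Rightarrow> rat list" where
  "apply_op g n as = map (\<lambda>j. g (map (\<lambda>a. a ! j) as)) [0..<n]"

definition supp :: "((rat list \<Rightarrow> rat) \<Rightarrow> rat) \<Rightarrow> (rat list \<Rightarrow> rat) set" where
  "supp \<omega> = {g. \<omega> g \<noteq> 0}"

text \<open>Valued structure: symbols of type 's, arity ar, cost functions cf.\<close>
definition fractional_polymorphism ::
  "('s \<Rightarrow> nat) \<Rightarrow> ('s \<Rightarrow> rat list \<Rightarrow> ereal) \<Rightarrow> nat \<Rightarrow> ((rat list \<Rightarrow> rat) \<Rightarrow> rat) \<Rightarrow> bool" where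
  "fractional_polymorphism ar cf k \<omega> \<longleftrightarrow>
     (\<forall>g. 0 \<le> \<omega> g) \<and> finite (supp \<omega>) \<and> (\<Sum>g\<in>supp \<omega>. \<omega> g) = 1 \<and>
     (\<forall>s as. length as = k \<longrightarrow> (\<forall>a\<in>set as. length a = ar s) \<longrightarrow>
        (\<Sum>g\<in>supp \<omega>. ereal (real_of_rat (\<omega> g)) * cf s (apply_op g (ar s) as))
          \<le> ereal (1 / real k) * (\<Sum>i<k. cf s (as ! i)))"

definition fully_symmetric :: "nat \<Rightarrow> ((rat list \<Rightarrow> rat) \<Rightarrow> rat) \<Rightarrow> bool" where
  "fully_symmetric k \<omega> \<longleftrightarrow>
     (\<forall>g\<in>supp \<omega>. \<forall>xs ys. length xs = k \<longrightarrow> mset ys = mset xs \<longrightarrow> g ys = g xs)"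

end

theory Submission
  imports Defs
begin

fun tins :: "rat list \<Rightarrow> rat list list \<Rightarrow> rat list list" where
  "tins x [] = [x]"
| "tins x (c # cs) = map2 min x c # tins (map2 max x c) cs"

fun sins :: "rat \<Rightarrow> rat list \<Rightarrow> rat list" where
  "sins x [] = [x]"
| "sins x (c # cs) = min x c # sins (max x c) cs"

primrec TT :: "rat list list \<Rightarrow> rat list list" where
  "TT [] = []"
| "TT (a # as) = tins a (TT as)"

lemma length_tins[simp]: "length (tins x C) = Suc (length C)"
  by (induction x C rule: tins.induct) auto

lemma length_TT[simp]: "length (TT as) = length as"
  by (induction as) auto

lemma tins_len: "length x = n \<Longrightarrow> \<forall>t\<in>set C. length t = n \<Longrightarrow> \<forall>t\<in>set (tins x C). length t = n"
  by (induction x C rule: tins.induct) auto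

lemma TT_len: "\<forall>t\<in>set as. length t = n \<Longrightarrow> \<forall>t\<in>set (TT as). length t = n"
  by (induction as) (auto intro: tins_len[rule_format])

lemma tins_col: "j < n \<Longrightarrow> length x = n \<Longrightarrow> \<forall>t\<in>set C. length t = n \<Longrightarrow>
   map (\<lambda>t. t ! j) (tins x C) = sins (x ! j) (map (\<lambda>t. t ! j) C)"
  by (induction x C rule: tins.induct) auto

lemma sins_insort: "sorted cs \<Longrightarrow> sins x cs = insort x cs"
proof (induction cs arbitrary: x)
  case Nil then show ?case by simp
next
  case (Cons c cs)
  then have IH: "sins (max x c) cs = insort (max x c) cs" by simp
  show ?case
  proof (cases "x \<le> c")
    case True
    have "insort c cs = c # cs" using Cons.prems
      by (cases cs) auto
    then show ?thesis using True IH by (simp add: max_def min_def)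
  next
    case False
    then show ?thesis using IH by (simp add: max_def min_def)
  qed
qed

lemma TT_col: "j < n \<Longrightarrow> \<forall>t\<in>set as. length t = n \<Longrightarrow>
   map (\<lambda>t. t ! j) (TT as) = sort (map (\<lambda>t. t ! j) as)"
proof (induction as)
  case Nil then show ?case by simp
next
  case (Cons a as)
  have "map (\<lambda>t. t ! j) (TT (a # as)) = sins (a ! j) (map (\<lambda>t. t ! j) (TT as))"
    using Cons.prems TT_len[of as n] by (simp add: tins_col)
  also have "\<dots> = insort (a ! j) (sort (map (\<lambda>t. t ! j) as))"
    using Cons by (simp add: sins_insort)
  finally show ?case by simp
qed

lemma tins_sum:
  assumes sm: "submodular n f"
  shows "length x = n \<Longrightarrow> \<forall>t\<in>set C. length t = n \<Longrightarrow>
    sum_list (map f (tins x C)) \<le> f x + sum_list (map f C)"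
proof (induction x C rule: tins.induct)
  case (1 x) then show ?case by simp
next
  case (2 x c cs)
  have IH: "sum_list (map f (tins (map2 max x c) cs)) \<le> f (map2 max x c) + sum_list (map f cs)"
    using 2 by simp
  have S: "f (map2 min x c) + f (map2 max x c) \<le> f x + f c"
    using sm 2(2,3) unfolding submodular_def by auto
  have "sum_list (map f (tins x (c # cs))) = f (map2 min x c) + sum_list (map f (tins (map2 max x c) cs))"
    by simp
  also have "\<dots> \<le> f (map2 min x c) + (f (map2 max x c) + sum_list (map f cs))"
    using IH by (rule add_left_mono)
  also have "\<dots> = (f (map2 min x c) + f (map2 max x c)) + sum_list (map f cs)"
    by (simp add: add.assoc)
  also have "\<dots> \<le> (f x + f c) + sum_list (map f cs)"
    using S by (rule add_right_mono)
  finally show ?case by (simp add: add.assoc)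
qed

lemma TT_sum:
  assumes sm: "submodular n f"
  shows "\<forall>t\<in>set as. length t = n \<Longrightarrow> sum_list (map f (TT as)) \<le> sum_list (map f as)"
proof (induction as)
  case Nil then show ?case by simp
next
  case (Cons a as)
  have "sum_list (map f (TT (a # as))) \<le> f a + sum_list (map f (TT as))"
    using tins_sum[OF sm] Cons.prems TT_len[of as n] by simp
  also have "\<dots> \<le> f a + sum_list (map f as)"
    using Cons by (intro add_left_mono) simp
  finally show ?case by simp
qed

definition gop :: "nat \<Rightarrow> rat list \<Rightarrow> rat" where
  "gop i = (\<lambda>xs. sort xs ! i)"

lemma apply_gop: "i < length as \<Longrightarrow> \<forall>t\<in>set as. length t = n \<Longrightarrow>
   apply_op (gop i) n as = TT as ! i"
  apply (rule nth_equalityI)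
  using TT_len[of as n] apply (simp add: apply_op_def)
  apply (simp add: apply_op_def gop_def)
  apply (subst TT_col[symmetric, of _ n], simp_all)
  done

lemma gop_inj: "inj_on gop {..<k}"
proof (rule inj_onI)
  fix i j assume i: "i \<in> {..<k}" and j: "j \<in> {..<k}" and e: "gop i = gop j"
  have s: "sorted (map (of_nat :: nat \<Rightarrow> rat) [0..<k])"
    by (simp add: sorted_map sorted_wrt_mono_rel)
  have "gop i (map of_nat [0..<k]) = (of_nat i :: rat)"
    using i s by (simp add: gop_def sorted_sort_id)
  moreover have "gop j (map of_nat [0..<k]) = (of_nat j :: rat)"
    using j s by (simp add: gop_def sorted_sort_id)
  ultimately have "(of_nat i :: rat) = of_nat j" using e by metis
  then show "i = j" by simp
qed

theorem corollary5:
  fixes ar :: "'s \<Rightarrow> nat" and cf :: "'s \<Rightarrow> rat list \<Rightarrow> ereal"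
  assumes valued: "\<forall>s. rat_valued (ar s) (cf s)"
    and pl: "(\<forall>s. PL (ar s) (cf s)) \<or> (\<forall>s. PLH (ar s) (cf s))"
    and sub: "\<forall>s. submodular (ar s) (cf s)"
  shows "\<forall>k\<ge>2. \<exists>\<omega>. fractional_polymorphism ar cf k \<omega> \<and> fully_symmetric k \<omega>"
proof (intro allI impI)
  fix k :: nat assume k: "2 \<le> k"
  define G where "G = gop ` {..<k}"
  define \<omega> where "\<omega> = (\<lambda>g. if g \<in> G then 1 / (of_nat k :: rat) else 0)"
  have kpos: "(of_nat k :: rat) > 0" using k by simp
  have suppG: "supp \<omega> = G" using kpos by (auto simp: supp_def \<omega>_def)
  have finG: "finite G" by (simp add: G_def)
  have cardG: "card G = k" unfolding G_def using gop_inj by (simp add: card_image)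
  have sym: "fully_symmetric k \<omega>"
    unfolding fully_symmetric_def suppG
  proof (intro ballI allI impI)
    fix g and xs ys :: "rat list" assume "g \<in> G" "length xs = k" "mset ys = mset xs"
    then obtain i where "g = gop i" by (auto simp: G_def)
    moreover have "sort ys = sort xs"
      by (metis \<open>mset ys = mset xs\<close> sorted_list_of_multiset_mset)
    ultimately show "g ys = g xs" by (simp add: gop_def)
  qed
  have fp: "fractional_polymorphism ar cf k \<omega>"
    unfolding fractional_polymorphism_def suppG
  proof (intro conjI allI impI)
    fix g show "0 \<le> \<omega> g" using kpos by (simp add: \<omega>_def)
  next
    show "finite G" by (rule finG)
  next
    have "(\<Sum>g\<in>G. \<omega> g) = (\<Sum>g\<in>G. 1 / (of_nat k :: rat))"
      by (rule sum.cong) (auto simp: \<omega>_def)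
    also have "\<dots> = 1" using cardG kpos by simp
    finally show "(\<Sum>g\<in>G. \<omega> g) = 1" .
  next
    fix s and as :: "rat list list"
    assume len: "length as = k" and la: "\<forall>a\<in>set as. length a = ar s"
    have c: "real_of_rat (1 / of_nat k) = 1 / real k"
      by (simp add: of_rat_divide)
    have "(\<Sum>g\<in>G. ereal (real_of_rat (\<omega> g)) * cf s (apply_op g (ar s) as))
        = (\<Sum>i\<in>{..<k}. ereal (1 / real k) * cf s (apply_op (gop i) (ar s) as))"
    proof -
      have "(\<Sum>g\<in>G. ereal (real_of_rat (\<omega> g)) * cf s (apply_op g (ar s) as))
        = (\<Sum>i\<in>{..<k}. ereal (real_of_rat (\<omega> (gop i))) * cf s (apply_op (gop i) (ar s) as))"
        unfolding G_def by (simp only: sum.reindex[OF gop_inj] comp_def)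
      also have "\<dots> = (\<Sum>i\<in>{..<k}. ereal (1 / real k) * cf s (apply_op (gop i) (ar s) as))"
        by (rule sum.cong) (auto simp: \<omega>_def G_def c)
      finally show ?thesis .
    qed
    also have "\<dots> = (\<Sum>i\<in>{..<k}. ereal (1 / real k) * cf s (TT as ! i))"
      by (rule sum.cong) (auto simp: apply_gop len la)
    also have "\<dots> = (\<Sum>i\<in>{..<k}. cf s (TT as ! i)) * ereal (1 / real k)"
      by (subst sum_distrib_right_ereal) (auto simp: mult.commute)
    finally have E: "(\<Sum>g\<in>G. ereal (real_of_rat (\<omega> g)) * cf s (apply_op g (ar s) as))
      = (\<Sum>i\<in>{..<k}. cf s (TT as ! i)) * ereal (1 / real k)" .
    have "(\<Sum>i\<in>{..<k}. cf s (TT as ! i)) \<le> (\<Sum>i<k. cf s (as ! i))"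
    proof -
      have "(\<Sum>i\<in>{..<k}. cf s (TT as ! i)) = sum_list (map (cf s) (TT as))"
        using len by (simp add: sum_list_sum_nth atLeast0LessThan)
      also have "\<dots> \<le> sum_list (map (cf s) as)"
        using TT_sum[of "ar s" "cf s" as] sub la by simp
      also have "sum_list (map (cf s) as) = (\<Sum>i<k. cf s (as ! i))"
        using len by (simp add: sum_list_sum_nth atLeast0LessThan)
      finally show ?thesis .
    qed
    then have "(\<Sum>i\<in>{..<k}. cf s (TT as ! i)) * ereal (1 / real k) \<le> (\<Sum>i<k. cf s (as ! i)) * ereal (1 / real k)"
      by (rule ereal_mult_right_mono) simp
    with E show "(\<Sum>g\<in>G. ereal (real_of_rat (\<omega> g)) * cf s (apply_op g (ar s) as))
          \<le> ereal (1 / real k) * (\<Sum>i<k. cf s (as ! i))"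
      by (simp add: mult.commute)
  qed
  show "\<exists>\<omega>. fractional_polymorphism ar cf k \<omega> \<and> fully_symmetric k \<omega>"
    using fp sym by blast
qed

end
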